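(* Let $X$ be a proper geodesic metric space. For any $r\ge C>0$ and $M>0$ there exist $\hat r=\hat r(r,C,M)>0$ and $L_0=L_0(r,C,M)>0$ with the following property. Let $\alpha,\beta$ be geodesics with $d(\alpha^-,\beta^-)\le M$ and $d(\alpha^+,\beta^+)\le M$, and let $p$ be a $C$-contracting geodesic segment of length at least $L_0$. If $d(p^-,\alpha)\le r$ and $d(p^+,\alpha)\le r$, then $d(p^-,\beta)\le\hat r$ and $d(p^+,\beta)\le\hat r$.
   Context: $\gamma^-,\gamma^+$ denote the initial and terminal points of a path $\gamma$. $\pi_A$ is nearest-point projection; a closed $U$ is $C$-contracting if every geodesic $\gamma$ with $d(\gamma,U)\ge C$ satisfies $\mathrm{diam}(\pi_U(\gamma))\le C$. *)

theory Defs
  imports "HOL-Analysis.Analysis"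
begin

text \<open>A geodesic (segment) of length L \<ge> 0 is an isometric embedding of [0,L];
  its initial point is g 0, terminal point g L, and its image is g ` {0..L}.\<close>
definition geodesic :: "(real \<Rightarrow> 'a::metric_space) \<Rightarrow> real \<Rightarrow> bool" where
  "geodesic g L \<longleftrightarrow> L \<ge> 0 \<and> (\<forall>s\<in>{0..L}. \<forall>t\<in>{0..L}. dist (g s) (g t) = \<bar>s - t\<bar>)"

definition proper_space :: "'a::metric_space itself \<Rightarrow> bool" where
  "proper_space _ \<longleftrightarrow> (\<forall>(x::'a) r. compact (cball x r))"

definition geodesic_space :: "'a::metric_space itself \<Rightarrow> bool" where
  "geodesic_space _ \<longleftrightarrow> (\<forall>(x::'a) y. \<exists>g. geodesic g (dist x y) \<and> g 0 = x \<and> g (dist x y) = y)"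

definition proj :: "'a::metric_space set \<Rightarrow> 'a \<Rightarrow> 'a set" where
  "proj U x = {u \<in> U. dist x u = infdist x U}"

definition proj_set :: "'a::metric_space set \<Rightarrow> 'a set \<Rightarrow> 'a set" where
  "proj_set U A = (\<Union>x\<in>A. proj U x)"

definition contracting :: "real \<Rightarrow> 'a::metric_space set \<Rightarrow> bool" where
  "contracting C U \<longleftrightarrow> closed U \<and>
     (\<forall>g L. geodesic g L \<longrightarrow> setdist (g ` {0..L}) U \<ge> C \<longrightarrow>
        diameter (proj_set U (g ` {0..L})) \<le> C)"

end

theory Submission
  imports Defs
begin

lemma geo_dist: "geodesic g L \<Longrightarrow> s\<in>{0..L} \<Longrightarrow> t\<in>{0..L} \<Longrightarrow> dist (g s) (g t) = \<bar>s-t\<bar>"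
  unfolding geodesic_def by blast

lemma geo_nonneg: "geodesic g L \<Longrightarrow> 0 \<le> L"
  unfolding geodesic_def by blast

lemma geo_cont: assumes "geodesic g L" shows "continuous_on {0..L} g"
  unfolding continuous_on_iff
proof (intro ballI allI impI)
  fix x e assume x: "x \<in> {0..L}" and e: "(0::real) < e"
  show "\<exists>d>0. \<forall>x'\<in>{0..L}. dist x' x < d \<longrightarrow> dist (g x') (g x) < e"
    using e geo_dist[OF assms _ x] by (auto simp: dist_real_def intro!: exI[of _ e])
qed

lemma geo_compact: "geodesic g L \<Longrightarrow> compact (g ` {0..L})"
  by (intro compact_continuous_image geo_cont) auto

lemma geo_ne: "geodesic g L \<Longrightarrow> g ` {0..L} \<noteq> {}"
  using geo_nonneg by fastforce

lemma attain:
  fixes U :: "'a::metric_space set"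
  assumes "compact U" "U \<noteq> {}"
  shows "\<exists>z\<in>U. dist x z = infdist x U"
proof -
  have "continuous_on U (dist x)" by (intro continuous_intros)
  from continuous_attains_inf[OF assms this] obtain z where z: "z \<in> U" "\<forall>y\<in>U. dist x z \<le> dist x y" by blast
  have "infdist x U = (INF a\<in>U. dist x a)" using assms infdist_notempty by blast
  also have "\<dots> \<ge> dist x z" using z assms by (intro cINF_greatest) auto
  finally have "dist x z \<le> infdist x U" .
  with infdist_le[OF z(1), of x] z(1) show ?thesis by force
qed

lemma proj_ne: "compact U \<Longrightarrow> U \<noteq> {} \<Longrightarrow> \<exists>z. z \<in> proj U x"
  using attain unfolding proj_def by blast

lemma proj_D: "z \<in> proj U x \<Longrightarrow> z \<in> U \<and> dist x z = infdist x U"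
  unfolding proj_def by blast

lemma geo_rev: "geodesic g L \<Longrightarrow> geodesic (\<lambda>t. g (L - t)) L"
  unfolding geodesic_def by auto

lemma geo_rev_img: "(\<lambda>t. g (L - t)) ` {0..L} = g ` {0..(L::real)}"
proof (intro equalityI subsetI)
  fix y assume "y \<in> (\<lambda>t. g (L - t)) ` {0..L}"
  then obtain t where "t \<in> {0..L}" "y = g (L - t)" by blast
  then show "y \<in> g ` {0..L}" by (intro image_eqI[of _ _ "L - t"]) auto
next
  fix y assume "y \<in> g ` {0..L}"
  then obtain t where "t \<in> {0..L}" "y = g t" by blast
  then show "y \<in> (\<lambda>t. g (L - t)) ` {0..L}" by (intro image_eqI[of _ _ "L - t"]) auto
qed

lemma geo_sub: "geodesic g L \<Longrightarrow> 0 \<le> T \<Longrightarrow> T \<le> L \<Longrightarrow> geodesic g T"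
  unfolding geodesic_def by auto

lemma CL:
  fixes \<gamma> :: "real \<Rightarrow> 'a::metric_space"
  assumes con: "contracting C U" and cU: "compact U" "U \<noteq> {}" and C: "C > 0"
    and g: "geodesic \<gamma> L" and z: "z \<in> proj U (\<gamma> 0)"
    and ex: "\<exists>t\<in>{0..L}. infdist (\<gamma> t) U \<le> C"
  shows "\<exists>t\<in>{0..L}. dist (\<gamma> t) z \<le> 2*C"
proof -
  define S where "S = {t\<in>{0..L}. infdist (\<gamma> t) U \<le> C}"
  define ts where "ts = Inf S"
  have Sne: "S \<noteq> {}" using ex S_def by blast
  have bdd: "bdd_below S" unfolding S_def by (rule bdd_belowI[of _ 0]) auto
  have ts0: "0 \<le> ts" unfolding ts_def using Sne by (intro cInf_greatest) (auto simp: S_def)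
  obtain t' where t': "t' \<in> S" using Sne by blast
  have tsL: "ts \<le> L" using cInf_lower[OF t' bdd] t' unfolding ts_def S_def by auto
  have below: "infdist (\<gamma> t) U > C" if "0 \<le> t" "t < ts" for t
  proof (rule ccontr)
    assume "\<not> ?thesis"
    then have "t \<in> S" using that tsL by (auto simp: S_def)
    then have "ts \<le> t" unfolding ts_def using bdd by (rule cInf_lower)
    then show False using that by linarith
  qed
  have le: "infdist (\<gamma> ts) U \<le> C"
  proof (rule ccontr)
    assume ne1: "\<not> ?thesis"
    define e where "e = infdist (\<gamma> ts) U - C"
    have e: "e > 0" using ne1 e_def by linarith
    have "Inf S < ts + e" using e ts_def by linarith
    then obtain t where t: "t \<in> S" "t < ts + e" using cInf_lessD[OF Sne] by blast
    have "ts \<le> t" unfolding ts_def using t(1) bdd by (rule cInf_lower)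
    have tL: "t \<in> {0..L}" "infdist (\<gamma> t) U \<le> C" using t(1) by (auto simp: S_def)
    have "dist (\<gamma> ts) (\<gamma> t) = \<bar>ts - t\<bar>" using geo_dist[OF g] tL ts0 tsL by auto
    moreover have "infdist (\<gamma> ts) U \<le> infdist (\<gamma> t) U + dist (\<gamma> ts) (\<gamma> t)" by (rule infdist_triangle)
    ultimately show False using tL t(2) \<open>ts \<le> t\<close> e_def by linarith
  qed
  show ?thesis
  proof (cases "ts = 0")
    case True
    then have "dist (\<gamma> 0) z \<le> C" using le proj_D[OF z] by simp
    then show ?thesis using ts0 tsL True C by (intro bexI[of _ 0]) auto
  next
    case False
    then have tsp: "ts > 0" using ts0 by linarith
    have ge: "infdist (\<gamma> ts) U \<ge> C"
    proof (rule ccontr)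
      assume ne2: "\<not> ?thesis"
      define e where "e = C - infdist (\<gamma> ts) U"
      have e: "e > 0" using ne2 e_def by linarith
      define t where "t = ts - min ts e / 2"
      have t: "0 \<le> t" "t < ts" using tsp e unfolding t_def by (auto simp: min_def)
      have "dist (\<gamma> t) (\<gamma> ts) = \<bar>t - ts\<bar>" using geo_dist[OF g] t tsL by auto
      moreover have "infdist (\<gamma> t) U \<le> infdist (\<gamma> ts) U + dist (\<gamma> t) (\<gamma> ts)" by (rule infdist_triangle)
      moreover have "ts - t < e" using tsp e unfolding t_def by (auto simp: min_def)
      ultimately show False using below[OF t] e_def t by linarith
    qed
    have all: "C \<le> infdist (\<gamma> t) U" if "t \<in> {0..ts}" for t
      using below[of t] ge that by (cases "t = ts") auto
    have sd: "C \<le> setdist (\<gamma> ` {0..ts}) U"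
    proof -
      have "C \<le> dist x y" if "x \<in> \<gamma> ` {0..ts}" "y \<in> U" for x y
        using all that infdist_le[OF that(2), of x] by force
      then show ?thesis unfolding le_setdist_iff using cU(2) ts0 by auto
    qed
    have gts: "geodesic \<gamma> ts" using geo_sub[OF g ts0 tsL] .
    have diam: "diameter (proj_set U (\<gamma> ` {0..ts})) \<le> C"
      using con gts sd unfolding contracting_def by blast
    obtain w where w: "w \<in> proj U (\<gamma> ts)" using proj_ne[OF cU] by blast
    have bd: "bounded (proj_set U (\<gamma> ` {0..ts}))"
      by (rule bounded_subset[OF compact_imp_bounded[OF cU(1)]]) (auto simp: proj_set_def proj_def)
    have zin: "z \<in> proj_set U (\<gamma> ` {0..ts})" using z ts0 unfolding proj_set_def by auto
    have win: "w \<in> proj_set U (\<gamma> ` {0..ts})" using w ts0 unfolding proj_set_def by auto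
    have "dist z w \<le> C" using diameter_bounded_bound[OF bd zin win] diam by linarith
    moreover have "dist (\<gamma> ts) w \<le> C" using proj_D[OF w] le by simp
    moreover have "dist (\<gamma> ts) z \<le> dist (\<gamma> ts) w + dist w z" by (rule dist_triangle)
    ultimately have "dist (\<gamma> ts) z \<le> 2*C" by (simp add: dist_commute)
    then show ?thesis using ts0 tsL by auto
  qed
qed

lemma G:
  fixes \<gamma> :: "real \<Rightarrow> 'a::metric_space"
  assumes con: "contracting C U" and cU: "compact U" "U \<noteq> {}" and C: "C > 0"
    and g: "geodesic \<gamma> L" and zu: "zu \<in> proj U (\<gamma> 0)" and zv: "zv \<in> proj U (\<gamma> L)"
    and far: "dist zu zv > C"
  shows "\<exists>t\<in>{0..L}. dist (\<gamma> t) zu \<le> 2*C"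
proof (cases "\<exists>t\<in>{0..L}. infdist (\<gamma> t) U \<le> C")
  case True
  then show ?thesis using CL[OF con cU C g zu] by blast
next
  case False
  have L: "0 \<le> L" using geo_nonneg[OF g] .
  have sd: "C \<le> setdist (\<gamma> ` {0..L}) U"
  proof -
    have "C \<le> dist x y" if "x \<in> \<gamma> ` {0..L}" "y \<in> U" for x y
      using False that infdist_le[OF that(2), of x] by force
    then show ?thesis unfolding le_setdist_iff using cU(2) L by auto
  qed
  have diam: "diameter (proj_set U (\<gamma> ` {0..L})) \<le> C"
    using con g sd unfolding contracting_def by blast
  have bd: "bounded (proj_set U (\<gamma> ` {0..L}))"
    by (rule bounded_subset[OF compact_imp_bounded[OF cU(1)]]) (auto simp: proj_set_def proj_def)
  have zin: "zu \<in> proj_set U (\<gamma> ` {0..L})" using zu L unfolding proj_set_def by auto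
  have win: "zv \<in> proj_set U (\<gamma> ` {0..L})" using zv L unfolding proj_set_def by auto
  show ?thesis using diameter_bounded_bound[OF bd zin win] diam far by linarith
qed

lemma G2:
  fixes \<gamma> :: "real \<Rightarrow> 'a::metric_space"
  assumes con: "contracting C U" and cU: "compact U" "U \<noteq> {}" and C: "C > 0"
    and g: "geodesic \<gamma> L" and zu: "zu \<in> proj U (\<gamma> 0)" and zv: "zv \<in> proj U (\<gamma> L)"
    and far: "dist zu zv > C"
  shows "\<exists>t\<in>{0..L}. dist (\<gamma> t) zv \<le> 2*C"
proof -
  have g': "geodesic (\<lambda>t. \<gamma> (L - t)) L" using geo_rev[OF g] .
  have "\<exists>t\<in>{0..L}. dist ((\<lambda>t. \<gamma> (L - t)) t) zv \<le> 2*C"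
    by (rule G[OF con cU C g']) (use zu zv far in \<open>auto simp: dist_commute\<close>)
  then obtain t where "t \<in> {0..L}" "dist (\<gamma> (L - t)) zv \<le> 2*C" by auto
  then show ?thesis by (intro bexI[of _ "L - t"]) auto
qed

lemma Gp:
  fixes \<gamma> :: "real \<Rightarrow> 'a::metric_space"
  assumes con: "contracting C U" and cU: "compact U" "U \<noteq> {}" and C: "C > 0"
    and g: "geodesic \<gamma> L" and zu: "zu \<in> proj U (\<gamma> 0)" and zv: "zv \<in> proj U (\<gamma> L)"
    and far: "dist zu zv > C"
  shows "dist (\<gamma> 0) (\<gamma> L) \<ge> infdist (\<gamma> 0) U + dist zu zv + infdist (\<gamma> L) U - 8*C"
proof -
  obtain t1 where t1: "t1 \<in> {0..L}" "dist (\<gamma> t1) zu \<le> 2*C" using G[OF assms] by blast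
  obtain t2 where t2: "t2 \<in> {0..L}" "dist (\<gamma> t2) zv \<le> 2*C" using G2[OF assms] by blast
  have L: "0 \<le> L" using geo_nonneg[OF g] .
  have d: "dist (\<gamma> s) (\<gamma> t) = \<bar>s - t\<bar>" if "s \<in> {0..L}" "t \<in> {0..L}" for s t
    using geo_dist[OF g that] .
  have dL: "dist (\<gamma> 0) (\<gamma> L) = L" using d[of 0 L] L by auto
  have d01: "dist (\<gamma> 0) (\<gamma> t1) = t1" "dist (\<gamma> 0) (\<gamma> t2) = t2"
     "dist (\<gamma> t1) (\<gamma> L) = L - t1" "dist (\<gamma> t2) (\<gamma> L) = L - t2"
     "dist (\<gamma> t1) (\<gamma> t2) = \<bar>t1 - t2\<bar>"
    using d t1 t2 L by auto
  have pu: "dist (\<gamma> 0) zu = infdist (\<gamma> 0) U" "zu \<in> U" using proj_D[OF zu] by auto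
  have pv: "dist (\<gamma> L) zv = infdist (\<gamma> L) U" "zv \<in> U" using proj_D[OF zv] by auto
  have i1: "infdist (\<gamma> 0) U \<le> dist (\<gamma> 0) zv" using infdist_le[OF pv(2)] .
  have i2: "infdist (\<gamma> L) U \<le> dist (\<gamma> L) zu" using infdist_le[OF pu(2)] .
  have tr1: "dist (\<gamma> 0) zu \<le> dist (\<gamma> 0) (\<gamma> t1) + dist (\<gamma> t1) zu" by (rule dist_triangle)
  have tr2: "dist zu zv \<le> dist zu (\<gamma> t1) + dist (\<gamma> t1) zv" by (rule dist_triangle)
  have tr3: "dist (\<gamma> t1) zv \<le> dist (\<gamma> t1) (\<gamma> t2) + dist (\<gamma> t2) zv" by (rule dist_triangle)
  have tr4: "dist (\<gamma> L) zv \<le> dist (\<gamma> L) (\<gamma> t2) + dist (\<gamma> t2) zv" by (rule dist_triangle)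
  have tr5: "dist (\<gamma> 0) zv \<le> dist (\<gamma> 0) (\<gamma> t2) + dist (\<gamma> t2) zv" by (rule dist_triangle)
  have tr6: "dist (\<gamma> L) zu \<le> dist (\<gamma> L) (\<gamma> t1) + dist (\<gamma> t1) zu" by (rule dist_triangle)
  show ?thesis
    using dL d01 pu pv i1 i2 tr1 tr2 tr3 tr4 tr5 tr6 t1 t2
    by (auto simp: dist_commute abs_if split: if_splits)
qed


lemma H:
  fixes p :: "real \<Rightarrow> 'a::metric_space"
  assumes gs: "geodesic_space TYPE('a)" and p: "geodesic p l"
    and con: "contracting C (p ` {0..l})" and C: "C > 0" and r: "r \<ge> C" and E: "E \<ge> 0"
    and hyp: "dist y x0 + dist x0 x1 \<le> dist y x1 + E"
    and x0: "dist x0 (p 0) \<le> r" and x1: "dist x1 (p l) \<le> r"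
    and l: "l > 5*r + 4*C + E" and zy: "zy \<in> proj (p ` {0..l}) y"
  shows "dist zy (p 0) \<le> 3*r + 4*C + E"
proof -
  let ?U = "p ` {0..l}"
  have cU: "compact ?U" "?U \<noteq> {}" using geo_compact[OF p] geo_ne[OF p] by auto
  have l0: "0 \<le> l" using geo_nonneg[OF p] .
  have p0U: "p 0 \<in> ?U" and plU: "p l \<in> ?U" using l0 by auto
  obtain z0 where z0: "z0 \<in> proj ?U x0" using proj_ne[OF cU] by blast
  obtain z1 where z1: "z1 \<in> proj ?U x1" using proj_ne[OF cU] by blast
  obtain \<sigma> where s: "\<sigma> \<in> {0..l}" "zy = p \<sigma>" using proj_D[OF zy] by blast
  obtain t0 where t0: "t0 \<in> {0..l}" "z0 = p t0" using proj_D[OF z0] by blast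
  obtain t1 where t1: "t1 \<in> {0..l}" "z1 = p t1" using proj_D[OF z1] by blast
  have d: "dist (p s) (p t) = \<bar>s - t\<bar>" if "s \<in> {0..l}" "t \<in> {0..l}" for s t
    using geo_dist[OF p that] .
  have h0: "infdist x0 ?U \<le> r" using infdist_le2[OF p0U x0] .
  have h1: "infdist x1 ?U \<le> r" using infdist_le2[OF plU x1] .
  have dz0: "dist x0 z0 = infdist x0 ?U" using proj_D[OF z0] by simp
  have dz1: "dist x1 z1 = infdist x1 ?U" using proj_D[OF z1] by simp
  have dzy: "dist y zy = infdist y ?U" using proj_D[OF zy] by simp
  have "dist (p 0) z0 \<le> dist (p 0) x0 + dist x0 z0" by (rule dist_triangle)
  moreover have "dist (p 0) z0 = t0" using d[of 0 t0] t0 l0 by auto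
  ultimately have t0b: "t0 \<le> 2*r" using x0 h0 dz0 by (simp add: dist_commute)
  have "dist (p l) z1 \<le> dist (p l) x1 + dist x1 z1" by (rule dist_triangle)
  moreover have "dist (p l) z1 = l - t1" using d[of l t1] t1 l0 by auto
  ultimately have t1b: "l - t1 \<le> 2*r" using x1 h1 dz1 by (simp add: dist_commute)
  have ds: "dist zy (p 0) = \<sigma>" using d[of \<sigma> 0] s l0 by auto
  have D: "dist zy z0 = \<bar>\<sigma> - t0\<bar>" using d s t0 by auto
  have D01: "dist z0 z1 = \<bar>t0 - t1\<bar>" using d t0 t1 by auto
  have Dy1: "dist zy z1 = \<bar>\<sigma> - t1\<bar>" using d s t1 by auto
  show ?thesis
  proof (cases "dist zy z0 \<le> C")
    case True
    then show ?thesis using D ds t0b r C E by auto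
  next
    case False
    obtain g where g: "geodesic g (dist y x0)" "g 0 = y" "g (dist y x0) = x0"
      using gs unfolding geodesic_space_def by blast
    have "dist (g 0) (g (dist y x0)) \<ge> infdist (g 0) ?U + dist zy z0 + infdist (g (dist y x0)) ?U - 8*C"
      by (rule Gp[OF con cU C g(1)]) (use zy z0 False g in auto)
    then have i1: "dist y x0 \<ge> infdist y ?U + dist zy z0 + infdist x0 ?U - 8*C" using g by simp
    have i2: "dist z0 z1 \<le> dist z0 x0 + dist x0 x1 + dist x1 z1"
      by (metis add.commute add_le_cancel_left dist_triangle order_trans dist_triangle2)
    have i3: "dist y x1 \<le> dist y zy + dist zy z1 + dist z1 x1"
      by (metis add.commute add_le_cancel_left dist_triangle order_trans dist_triangle2)
    have key: "\<bar>\<sigma> - t0\<bar> + \<bar>t0 - t1\<bar> \<le> \<bar>\<sigma> - t1\<bar> + 2*r + 8*C + E"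
      using i1 i2 i3 hyp dz0 dz1 dzy h1 D D01 Dy1 by (simp add: dist_commute)
    show ?thesis using key ds t0b t1b l r C E s t0 t1 False D
      by (auto simp: abs_if split: if_splits)
  qed
qed

lemma Q:
  fixes \<alpha> :: "real \<Rightarrow> 'a::metric_space"
  assumes g: "geodesic \<alpha> a" and ijk: "i \<in> {0..a}" "j \<in> {0..a}" "k \<in> {0..a}"
    and e: "\<bar>i - j\<bar> + \<bar>j - k\<bar> = \<bar>i - k\<bar>" and y: "dist y (\<alpha> i) \<le> M"
  shows "dist y (\<alpha> j) + dist (\<alpha> j) (\<alpha> k) \<le> dist y (\<alpha> k) + 2*M"
proof -
  have "dist y (\<alpha> j) \<le> dist y (\<alpha> i) + dist (\<alpha> i) (\<alpha> j)" by (rule dist_triangle)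
  moreover have "dist (\<alpha> i) (\<alpha> k) \<le> dist (\<alpha> i) y + dist y (\<alpha> k)" by (rule dist_triangle)
  moreover have "dist (\<alpha> i) (\<alpha> j) = \<bar>i - j\<bar>" "dist (\<alpha> j) (\<alpha> k) = \<bar>j - k\<bar>" "dist (\<alpha> i) (\<alpha> k) = \<bar>i - k\<bar>"
    using geo_dist[OF g] ijk by auto
  ultimately show ?thesis using e y by (simp add: dist_commute)
qed


lemma attain_img:
  assumes g: "geodesic \<alpha> a" and h: "infdist x (\<alpha> ` {0..a}) \<le> r"
  shows "\<exists>s\<in>{0..a}. dist x (\<alpha> s) \<le> r"
  using attain[OF geo_compact[OF g] geo_ne[OF g], of x] h by force

theorem lemma2p23:
  assumes "proper_space TYPE('a::metric_space)"
    and "geodesic_space TYPE('a)"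
    and "C > 0" and "r \<ge> C" and "M > 0"
  shows "\<exists>rh L0. rh > 0 \<and> L0 > 0 \<and>
    (\<forall>(\<alpha>::real \<Rightarrow> 'a) a \<beta> b p l.
       geodesic \<alpha> a \<longrightarrow> geodesic \<beta> b \<longrightarrow>
       dist (\<alpha> 0) (\<beta> 0) \<le> M \<longrightarrow> dist (\<alpha> a) (\<beta> b) \<le> M \<longrightarrow>
       geodesic p l \<longrightarrow> contracting C (p ` {0..l}) \<longrightarrow> l \<ge> L0 \<longrightarrow>
       infdist (p 0) (\<alpha> ` {0..a}) \<le> r \<longrightarrow> infdist (p l) (\<alpha> ` {0..a}) \<le> r \<longrightarrow>
       infdist (p 0) (\<beta> ` {0..b}) \<le> rh \<and> infdist (p l) (\<beta> ` {0..b}) \<le> rh)"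
proof -
  note gs = assms(2) and C = assms(3) and r = assms(4) and M = assms(5)
  define K where "K = 3*r + 4*C + 2*M"
  have main: "infdist (p 0) (\<beta> ` {0..b}) \<le> K + 2*C \<and> infdist (p l) (\<beta> ` {0..b}) \<le> K + 2*C"
    if ga: "geodesic \<alpha> a" and gb: "geodesic \<beta> b" and m0: "dist (\<alpha> 0) (\<beta> 0) \<le> M"
      and m1: "dist (\<alpha> a) (\<beta> b) \<le> M" and p: "geodesic p l" and con: "contracting C (p ` {0..l})"
      and l: "l \<ge> 10*r + 10*C + 10*M + 1"
      and i0: "infdist (p 0) (\<alpha> ` {0..a}) \<le> r" and i1: "infdist (p l) (\<alpha> ` {0..a}) \<le> r"
    for \<alpha> :: "real \<Rightarrow> 'a" and a \<beta> b p l
  proof -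
    let ?U = "p ` {0..l}"
    define p' where "p' = (\<lambda>t. p (l - t))"
    have gp': "geodesic p' l" using geo_rev[OF p] p'_def by simp
    have imgp': "p' ` {0..l} = ?U" using geo_rev_img p'_def by metis
    have con': "contracting C (p' ` {0..l})" using con imgp' by simp
    have cU: "compact ?U" "?U \<noteq> {}" using geo_compact[OF p] geo_ne[OF p] by auto
    have l0: "0 \<le> l" using geo_nonneg[OF p] .
    have a0: "0 \<le> a" using geo_nonneg[OF ga] .
    have b0: "0 \<le> b" using geo_nonneg[OF gb] .
    obtain s0 where s0: "s0 \<in> {0..a}" "dist (p 0) (\<alpha> s0) \<le> r" using attain_img[OF ga i0] by blast
    obtain s1 where s1: "s1 \<in> {0..a}" "dist (p l) (\<alpha> s1) \<le> r" using attain_img[OF ga i1] by blast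
    define x0 where "x0 = \<alpha> s0"
    define x1 where "x1 = \<alpha> s1"
    have m0': "dist (\<beta> 0) (\<alpha> 0) \<le> M" and m1': "dist (\<beta> b) (\<alpha> a) \<le> M"
      using m0 m1 by (auto simp: dist_commute)
    obtain y y' where yy: "(y = \<beta> 0 \<and> y' = \<beta> b) \<or> (y = \<beta> b \<and> y' = \<beta> 0)"
      and hy: "dist y x0 + dist x0 x1 \<le> dist y x1 + 2*M"
      and hy': "dist y' x1 + dist x1 x0 \<le> dist y' x0 + 2*M"
    proof (cases "s0 \<le> s1")
      case True
      have "dist (\<beta> 0) x0 + dist x0 x1 \<le> dist (\<beta> 0) x1 + 2*M"
        unfolding x0_def x1_def by (rule Q[OF ga _ s0(1) s1(1) _ m0']) (use a0 True s0 s1 in auto)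
      moreover have "dist (\<beta> b) x1 + dist x1 x0 \<le> dist (\<beta> b) x0 + 2*M"
        unfolding x0_def x1_def by (rule Q[OF ga _ s1(1) s0(1) _ m1']) (use a0 True s0 s1 in auto)
      ultimately show ?thesis using that by blast
    next
      case False
      have "dist (\<beta> b) x0 + dist x0 x1 \<le> dist (\<beta> b) x1 + 2*M"
        unfolding x0_def x1_def by (rule Q[OF ga _ s0(1) s1(1) _ m1']) (use a0 False s0 s1 in auto)
      moreover have "dist (\<beta> 0) x1 + dist x1 x0 \<le> dist (\<beta> 0) x0 + 2*M"
        unfolding x0_def x1_def by (rule Q[OF ga _ s1(1) s0(1) _ m0']) (use a0 False s0 s1 in auto)
      ultimately show ?thesis using that by blast
    qed
    obtain zy where zy: "zy \<in> proj ?U y" using proj_ne[OF cU] by blast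
    obtain zy' where zy': "zy' \<in> proj ?U y'" using proj_ne[OF cU] by blast
    have x0p: "dist x0 (p 0) \<le> r" and x1p: "dist x1 (p l) \<le> r"
      using s0 s1 unfolding x0_def x1_def by (auto simp: dist_commute)
    have Mnn: "2*M \<ge> 0" using M by simp
    have ly: "l > 5*r + 4*C + 2*M" using l r C M by linarith
    have A: "dist zy (p 0) \<le> K"
      unfolding K_def by (rule H[OF gs p con C r Mnn hy x0p x1p ly zy])
    have x1p': "dist x1 (p' 0) \<le> r" and x0p': "dist x0 (p' l) \<le> r"
      using x0p x1p unfolding p'_def by auto
    have zy'': "zy' \<in> proj (p' ` {0..l}) y'" using zy' imgp' by simp
    have B0: "dist zy' (p' 0) \<le> K"
      unfolding K_def by (rule H[OF gs gp' con' C r Mnn hy' x1p' x0p' ly zy''])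
    have B: "dist zy' (p l) \<le> K" using B0 unfolding p'_def by simp
    have dl: "dist (p 0) (p l) = l" using geo_dist[OF p, of 0 l] l0 by auto
    have "dist (p 0) (p l) \<le> dist (p 0) zy + dist zy (p l)" by (rule dist_triangle)
    moreover have "dist zy (p l) \<le> dist zy zy' + dist zy' (p l)" by (rule dist_triangle)
    ultimately have far: "dist zy zy' > C" using A B dl l r C M unfolding K_def
      by (simp add: dist_commute)
    have far': "dist zy' zy > C" using far by (simp add: dist_commute)
    have cl: "(\<exists>t\<in>{0..b}. dist (\<beta> t) zy \<le> 2*C) \<and> (\<exists>t\<in>{0..b}. dist (\<beta> t) zy' \<le> 2*C)"
      using yy
    proof
      assume e: "y = \<beta> 0 \<and> y' = \<beta> b"
      show ?thesis using G[OF con cU C gb _ _ far] G2[OF con cU C gb _ _ far] zy zy' e by auto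
    next
      assume e: "y = \<beta> b \<and> y' = \<beta> 0"
      show ?thesis using G[OF con cU C gb _ _ far'] G2[OF con cU C gb _ _ far'] zy zy' e by auto
    qed
    then obtain t t' where t: "t \<in> {0..b}" "dist (\<beta> t) zy \<le> 2*C"
      and t': "t' \<in> {0..b}" "dist (\<beta> t') zy' \<le> 2*C" by blast
    have "dist (p 0) (\<beta> t) \<le> dist (p 0) zy + dist zy (\<beta> t)" by (rule dist_triangle)
    then have "dist (p 0) (\<beta> t) \<le> K + 2*C" using A t by (simp add: dist_commute)
    moreover have "dist (p l) (\<beta> t') \<le> dist (p l) zy' + dist zy' (\<beta> t')" by (rule dist_triangle)
    then have "dist (p l) (\<beta> t') \<le> K + 2*C" using B t' by (simp add: dist_commute)
    ultimately show ?thesis using t(1) t'(1) infdist_le2[of "\<beta> t" "\<beta> ` {0..b}" "p 0"]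
        infdist_le2[of "\<beta> t'" "\<beta> ` {0..b}" "p l"] by auto
  qed
  show ?thesis
    apply (rule exI[of _ "K + 2*C"], rule exI[of _ "10*r + 10*C + 10*M + 1"])
    using main C r M unfolding K_def by auto
qed

end
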